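(* Consider the coded cooperative data exchange (CCDE) setting described in the context, with user set $V$, minimum sum-rate $R_{\mathrm{CO}}$, fundamental partition $\mathcal{P}^*$ (which has $|\mathcal{P}^*|\ge 2$), core $\mathscr{R}^*_{\mathrm{CO}}(V)$, and $K=|\mathcal{P}^*|-1$. Let $w_V\in\mathbb{R}_{>0}^{|V|}$ and $g(r_V)=\sum_{i\in V} r_i^2/w_i$. Let $\mathbb{Q}_K=\{z/K: z\in\mathbb{Z}\}$. Then a vector $r^*_V\in\mathscr{R}^*_{\mathrm{CO}}(V)\cap\mathbb{Q}_K^{|V|}$ is a minimizer of $$\min\{g(r_V): r_V\in\mathscr{R}^*_{\mathrm{CO}}(V)\cap\mathbb{Q}_K^{|V|}\}$$ if and only if, for all $i,j\in V$ and all positive integers $\zeta$ such that $r^*_V+\frac{\zeta}{K}(\chi_i-\chi_j)\in\mathscr{R}^*_{\mathrm{CO}}(V)$, we have $g(r^*_V)\le g\big(r^*_V+\frac{\zeta}{K}(\chi_i-\chi_j)\big)$.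
   Context: CCDE setting: there is a finite collection of independent packets, each uniformly distributed over a finite field; each user $i\in V$ ($|V|>1$) observes $Z_i$, a subset of the packets, and entropy is measured in packets, so that for $X\subseteq V$, $H(X)$ (the entropy of $Z_X=(Z_i:i\in X)$) is the number of distinct packets observed by users in $X$; in particular $H$ is integer-valued. Write $r(X)=\sum_{i\in X}r_i$ for $r_V\in\mathbb{R}^{|V|}$, and $H(X\mid Y)=H(X\cup Y)-H(Y)$. The achievable region is $\mathscr{R}(V)=\{r_V: r(X)\ge H(X\mid V\setminus X)\ \forall X\subsetneq V\}$, $R_{\mathrm{CO}}=\min\{r(V): r_V\in\mathscr{R}(V)\}$, and the core is $\mathscr{R}^*_{\mathrm{CO}}(V)=\{r_V\in\mathscr{R}(V): r(V)=R_{\mathrm{CO}}\}$. For $\alpha\in\mathbb{R}$, $f_\alpha(\emptyset)=0$ and $f_\alpha(X)=\alpha-H(V\setminus X\mid X)$ for $X\ne\emptyset$; the fundamental partition $\mathcal{P}^*$ is the finest partition of $V$ minimizing $\sum_{C\in\mathcal{P}}f_{R_{\mathrm{CO}}}(C)$ over all partitions $\mathcal{P}$ of $V$. $\chi_i\in\{0,1\}^{|V|}$ denotes the characteristic vector of $\{i\}$. *)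

theory Defs
  imports Complex_Main "HOL-Library.Disjoint_Sets"
begin

(* Users: a finite set V of type 'u; packets of type 'p; Z i = packets observed by user i. *)

definition ent :: "('u \<Rightarrow> 'p set) \<Rightarrow> 'u set \<Rightarrow> real" where
  "ent Z X = real (card (\<Union> (Z ` X)))"

definition cent :: "('u \<Rightarrow> 'p set) \<Rightarrow> 'u set \<Rightarrow> 'u set \<Rightarrow> real" where
  "cent Z X Y = ent Z (X \<union> Y) - ent Z Y"

(* achievable region; vectors r_V are functions vanishing outside V *)
definition region :: "'u set \<Rightarrow> ('u \<Rightarrow> 'p set) \<Rightarrow> ('u \<Rightarrow> real) set" where
  "region V Z = {r. (\<forall>i. i \<notin> V \<longrightarrow> r i = 0) \<and>
                     (\<forall>X. X \<subset> V \<longrightarrow> sum r X \<ge> cent Z X (V - X))}"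

definition R_CO :: "'u set \<Rightarrow> ('u \<Rightarrow> 'p set) \<Rightarrow> real" where
  "R_CO V Z = Inf {sum r V | r. r \<in> region V Z}"

definition core :: "'u set \<Rightarrow> ('u \<Rightarrow> 'p set) \<Rightarrow> ('u \<Rightarrow> real) set" where
  "core V Z = {r \<in> region V Z. sum r V = R_CO V Z}"

definition f_alpha :: "'u set \<Rightarrow> ('u \<Rightarrow> 'p set) \<Rightarrow> real \<Rightarrow> 'u set \<Rightarrow> real" where
  "f_alpha V Z \<alpha> X = (if X = {} then 0 else \<alpha> - cent Z (V - X) X)"

definition refines :: "'u set set \<Rightarrow> 'u set set \<Rightarrow> bool" where
  "refines P Q \<longleftrightarrow> (\<forall>C\<in>P. \<exists>D\<in>Q. C \<subseteq> D)"

definition minimizing_partition :: "'u set \<Rightarrow> ('u \<Rightarrow> 'p set) \<Rightarrow> 'u set set \<Rightarrow> bool" where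
  "minimizing_partition V Z P \<longleftrightarrow> partition_on V P \<and>
     (\<forall>Q. partition_on V Q \<longrightarrow>
        (\<Sum>C\<in>P. f_alpha V Z (R_CO V Z) C) \<le> (\<Sum>C\<in>Q. f_alpha V Z (R_CO V Z) C))"

definition fund_partition :: "'u set \<Rightarrow> ('u \<Rightarrow> 'p set) \<Rightarrow> 'u set set" where
  "fund_partition V Z = (THE P. minimizing_partition V Z P \<and>
      (\<forall>Q. minimizing_partition V Z Q \<longrightarrow> refines P Q))"

definition chi :: "'u \<Rightarrow> 'u \<Rightarrow> real" where
  "chi i = (\<lambda>k. if k = i then 1 else 0)"

definition QK_vecs :: "'u set \<Rightarrow> nat \<Rightarrow> ('u \<Rightarrow> real) set" where
  "QK_vecs V K = {r. \<forall>i\<in>V. \<exists>z::int. r i = real_of_int z / real K}"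

definition gfun :: "'u set \<Rightarrow> ('u \<Rightarrow> real) \<Rightarrow> ('u \<Rightarrow> real) \<Rightarrow> real" where
  "gfun V w r = (\<Sum>i\<in>V. (r i)\<^sup>2 / w i)"

end

theory Submission
  imports Defs
begin


definition pp :: "'u set \<Rightarrow> ('u \<Rightarrow> 'p set) \<Rightarrow> 'u set \<Rightarrow> real" where
  "pp V Z A = R_CO V Z - ent Z V + ent Z A"

definition ut :: "'u set \<Rightarrow> ('u \<Rightarrow> 'p set) \<Rightarrow> ('u \<Rightarrow> real) \<Rightarrow> 'u set \<Rightarrow> bool" where
  "ut V Z q A \<longleftrightarrow> A \<subseteq> V \<and> A \<noteq> {} \<and> sum q A = pp V Z A"

lemma core_le:
  assumes "finite V" "q \<in> core V Z" "A \<subseteq> V" "A \<noteq> {}"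
  shows "sum q A \<le> pp V Z A"
proof (cases "A = V")
  case True then show ?thesis using assms(2) by (simp add: core_def pp_def)
next
  case False
  let ?X = "V - A"
  have X: "?X \<subset> V" using assms False by blast
  have "sum q ?X \<ge> cent Z ?X (V - ?X)" using assms(2) X by (auto simp: core_def region_def)
  moreover have "V - ?X = A" using assms(3) by blast
  moreover have "?X \<union> A = V" using assms(3) by blast
  moreover have "sum q V = sum q ?X + sum q A" using assms(1,3) sum.subset_diff by blast
  moreover have "sum q V = R_CO V Z" using assms(2) by (simp add: core_def)
  ultimately show ?thesis by (simp add: cent_def pp_def)
qed

lemma core_intro:
  assumes "finite V" "\<forall>k. k \<notin> V \<longrightarrow> q k = 0" "sum q V = R_CO V Z"
    "\<forall>A. A \<subseteq> V \<longrightarrow> A \<noteq> {} \<longrightarrow> sum q A \<le> pp V Z A"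
  shows "q \<in> core V Z"
proof -
  have "sum q X \<ge> cent Z X (V - X)" if "X \<subset> V" for X
  proof -
    let ?A = "V - X"
    have "?A \<subseteq> V" "?A \<noteq> {}" using that by auto
    then have "sum q ?A \<le> pp V Z ?A" using assms(4) by blast
    moreover have "sum q V = sum q ?A + sum q X" using sum.subset_diff[of X V q] that assms(1) by auto
    moreover have "X \<union> ?A = V" using that by auto
    ultimately show ?thesis using assms(3) by (simp add: cent_def pp_def)
  qed
  then show ?thesis using assms by (simp add: core_def region_def)
qed

lemma ent_submod:
  assumes "finite V" "\<forall>i\<in>V. finite (Z i)" "A \<subseteq> V" "B \<subseteq> V"
  shows "ent Z (A \<union> B) + ent Z (A \<inter> B) \<le> ent Z A + ent Z B"
proof -
  let ?UA = "\<Union>(Z ` A)" and ?UB = "\<Union>(Z ` B)"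
  have fA0: "finite A" by (rule finite_subset[OF assms(3,1)])
  have fB0: "finite B" by (rule finite_subset[OF assms(4,1)])
  have fA: "finite ?UA" using fA0 assms(2,3) by (intro finite_UN_I) auto
  have fB: "finite ?UB" using fB0 assms(2,4) by (intro finite_UN_I) auto
  have e1: "\<Union>(Z ` (A\<union>B)) = ?UA \<union> ?UB" by auto
  have "\<Union>(Z ` (A\<inter>B)) \<subseteq> ?UA \<inter> ?UB" by auto
  hence c2: "card (\<Union>(Z ` (A\<inter>B))) \<le> card (?UA \<inter> ?UB)" using fA by (intro card_mono) auto
  have c3: "card (?UA \<union> ?UB) + card (?UA \<inter> ?UB) = card ?UA + card ?UB"
    using card_Un_Int[OF fA fB] by linarith
  have "real (card (?UA \<union> ?UB)) + real (card (\<Union>(Z ` (A\<inter>B)))) \<le> real (card ?UA) + real (card ?UB)"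
    using c2 c3 by linarith
  then show ?thesis by (simp add: ent_def e1)
qed

lemma ut_meet:
  assumes "finite V" "\<forall>i\<in>V. finite (Z i)" "q \<in> core V Z" "ut V Z q A" "ut V Z q B" "A \<inter> B \<noteq> {}"
  shows "ut V Z q (A \<inter> B)" "ut V Z q (A \<union> B)"
proof -
  have AB: "A \<subseteq> V" "B \<subseteq> V" "sum q A = pp V Z A" "sum q B = pp V Z B"
    using assms(4,5) by (auto simp: ut_def)
  have fin: "finite A" "finite B" using AB assms(1) finite_subset by auto
  have s: "sum q (A\<union>B) + sum q (A\<inter>B) = sum q A + sum q B" using fin by (rule sum.union_inter)
  have p: "pp V Z (A\<union>B) + pp V Z (A\<inter>B) \<le> pp V Z A + pp V Z B"
    using ent_submod[OF assms(1,2) AB(1,2)] by (simp add: pp_def)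
  have u1: "A \<union> B \<subseteq> V" "A \<union> B \<noteq> {}" "A \<inter> B \<subseteq> V" using AB assms(6) by auto
  have l1: "sum q (A\<union>B) \<le> pp V Z (A\<union>B)" using core_le[OF assms(1,3) u1(1,2)] .
  have l2: "sum q (A\<inter>B) \<le> pp V Z (A\<inter>B)" using core_le[OF assms(1,3) u1(3) assms(6)] .
  have e1: "sum q (A\<inter>B) = pp V Z (A\<inter>B)" using s p l1 l2 AB(3,4) by linarith
  have e2: "sum q (A\<union>B) = pp V Z (A\<union>B)" using s p l1 l2 AB(3,4) by linarith
  show "ut V Z q (A \<inter> B)" unfolding ut_def using e1 u1(3) assms(6) by blast
  show "ut V Z q (A \<union> B)" unfolding ut_def using e2 u1(1,2) by blast
qed

lemma family:
  assumes "finite V" "\<forall>i\<in>V. finite (Z i)" "rs \<in> core V Z" "r \<in> core V Z"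
  shows "finite F \<Longrightarrow> (\<forall>A\<in>F. ut V Z rs A) \<Longrightarrow> sum (\<lambda>k. r k - rs k) (\<Union>F) \<le> 0"
proof (induction "card F" arbitrary: F rule: less_induct)
  case less
  show ?case
  proof (cases "F = {}")
    case True then show ?thesis by simp
  next
    case False
    then obtain A where A: "A \<in> F" by blast
    have finU: "\<forall>X\<in>F. finite X"
    proof
      fix X assume "X \<in> F"
      then have "X \<subseteq> V" using less.prems(2) by (simp add: ut_def)
      then show "finite X" using assms(1) by (rule finite_subset)
    qed
    show ?thesis
    proof (cases "\<exists>B\<in>F. B \<noteq> A \<and> A \<inter> B \<noteq> {}")
      case True
      then obtain B where B: "B \<in> F" "B \<noteq> A" "A \<inter> B \<noteq> {}" by blast
      define F' where "F' = insert (A \<union> B) (F - {A, B})"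
      have "F - {A,B} \<subset> F - {A}" using A B by auto
      hence "card (F - {A,B}) < card (F - {A})" by (rule psubset_card_mono[OF finite_Diff[OF less.prems(1)]])
      moreover have "card F' \<le> Suc (card (F - {A,B}))" unfolding F'_def using less.prems(1) by (simp add: card_insert_if)
      moreover have "card (F - {A}) < card F" by (rule card_Diff1_less[OF less.prems(1) A])
      ultimately have cF: "card F' < card F" by linarith
      have UF: "\<Union>F' = \<Union>F" using A B by (auto simp: F'_def)
      have uA: "ut V Z rs A" "ut V Z rs B" using A B(1) less.prems(2) by blast+
      have uAB: "ut V Z rs (A \<union> B)" by (rule ut_meet(2)[OF assms(1,2,3) uA B(3)])
      have ut': "\<forall>X\<in>F'. ut V Z rs X" unfolding F'_def using uAB less.prems(2) by blast
      have "finite F'" using less.prems(1) by (simp add: F'_def)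
      then have "sum (\<lambda>k. r k - rs k) (\<Union>F') \<le> 0" by (rule less.hyps[OF cF _ ut'])
      from this[unfolded UF] show ?thesis .
    next
      case False
      let ?G = "F - {A}"
      have e: "\<Union>F = A \<union> \<Union>?G" using A by auto
      have dj: "A \<inter> \<Union>?G = {}" using False by auto
      have fA: "finite A" using finU A by auto
      have fG: "finite (\<Union>?G)" using finU less.prems(1) by auto
      have s: "sum (\<lambda>k. r k - rs k) (\<Union>F) = sum (\<lambda>k. r k - rs k) A + sum (\<lambda>k. r k - rs k) (\<Union>?G)"
        unfolding e using fA fG dj by (rule sum.union_disjoint)
      have uA: "ut V Z rs A" using A less.prems(2) by auto
      have "sum r A \<le> pp V Z A" using core_le[OF assms(1,4)] uA by (auto simp: ut_def)
      hence s1: "sum (\<lambda>k. r k - rs k) A \<le> 0" using uA by (simp add: sum_subtractf ut_def)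
      have cG: "card ?G < card F" by (rule card_Diff1_less[OF less.prems(1) A])
      have fG': "finite ?G" using less.prems(1) by simp
      have uG: "\<forall>X\<in>?G. ut V Z rs X" using less.prems(2) by simp
      have "sum (\<lambda>k. r k - rs k) (\<Union>?G) \<le> 0" by (rule less.hyps[OF cG fG' uG])
      then show ?thesis using s s1 by linarith
    qed
  qed
qed



lemma layer_cake:
  fixes d c :: "'a \<Rightarrow> real"
  shows "finite S \<Longrightarrow> sum d S = 0 \<Longrightarrow> (\<forall>\<theta>. sum d {k\<in>S. \<theta> < c k} \<ge> 0) \<Longrightarrow> (\<Sum>k\<in>S. d k * c k) \<ge> 0"
proof (induction "card (c ` S)" arbitrary: c rule: less_induct)
  case less
  show ?case
  proof (cases "S = {}")
    case True then show ?thesis by simp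
  next
    case ne: False
    define M where "M = Max (c ` S)"
    have fin: "finite (c ` S)" using less.prems(1) by simp
    have M_in: "M \<in> c ` S" using fin ne by (simp add: M_def)
    have M_ge: "\<forall>k\<in>S. c k \<le> M" using fin by (simp add: M_def)
    show ?thesis
    proof (cases "c ` S - {M} = {}")
      case True
      then have "\<forall>k\<in>S. c k = M" by auto
      then have "(\<Sum>k\<in>S. d k * c k) = (\<Sum>k\<in>S. d k * M)" by simp
      also have "\<dots> = sum d S * M" by (simp add: sum_distrib_right)
      finally show ?thesis using less.prems(2) by simp
    next
      case False
      define m where "m = Max (c ` S - {M})"
      have m_in: "m \<in> c ` S - {M}" unfolding m_def using False fin by (intro Max_in) auto
      have m_lt: "m < M"
      proof -
        obtain k where k: "k \<in> S" "m = c k" "m \<noteq> M" using m_in by auto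
        then show ?thesis using M_ge by (metis order_le_less)
      qed
      have gap: "\<forall>k\<in>S. m < c k \<longrightarrow> c k = M"
      proof (intro ballI impI, rule ccontr)
        fix k assume "k \<in> S" "m < c k" "c k \<noteq> M"
        then have "c k \<in> c ` S - {M}" by auto
        then have "c k \<le> m" using fin by (simp add: m_def)
        then show False using \<open>m < c k\<close> by simp
      qed
      define c' where "c' k = min (c k) m" for k
      have img: "c' ` S = c ` S - {M}"
      proof
        show "c' ` S \<subseteq> c ` S - {M}"
        proof
          fix x assume "x \<in> c' ` S"
          then obtain k where k: "k \<in> S" "x = c' k" by auto
          show "x \<in> c ` S - {M}"
          proof (cases "c k \<le> m")
            case True then show ?thesis using k m_lt by (auto simp: c'_def)
          next
            case False then show ?thesis using k m_in by (auto simp: c'_def)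
          qed
        qed
        show "c ` S - {M} \<subseteq> c' ` S"
        proof
          fix x assume x: "x \<in> c ` S - {M}"
          then obtain k where k: "k \<in> S" "x = c k" by auto
          have "x \<le> m" using x fin by (simp add: m_def)
          then have "c' k = x" using k by (simp add: c'_def)
          then show "x \<in> c' ` S" using k(1) by (metis image_eqI)
        qed
      qed
      have cc: "card (c' ` S) < card (c ` S)" unfolding img using fin M_in by (meson card_Diff1_less)
      have hyp: "\<forall>\<theta>. sum d {k\<in>S. \<theta> < c' k} \<ge> 0"
      proof
        fix \<theta>
        show "sum d {k\<in>S. \<theta> < c' k} \<ge> 0"
        proof (cases "\<theta> < m")
          case True
          then have "{k\<in>S. \<theta> < c' k} = {k\<in>S. \<theta> < c k}" by (auto simp: c'_def)
          then show ?thesis using less.prems(3) by simp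
        next
          case False
          then have "{k\<in>S. \<theta> < c' k} = {}" by (auto simp: c'_def)
          then show ?thesis by (simp only: sum.empty order_refl)
        qed
      qed
      have IH: "(\<Sum>k\<in>S. d k * c' k) \<ge> 0" using less.hyps[OF cc] less.prems(1,2) hyp by blast
      have dec: "d k * c k = d k * c' k + (if m < c k then d k * (M - m) else 0)" if "k \<in> S" for k
        proof (cases "m < c k")
        case True
        then have "c k = M" using gap that by blast
        then show ?thesis using True m_lt by (simp add: c'_def right_diff_distrib)
      next
        case False
        then show ?thesis by (simp add: c'_def)
      qed
      have "(\<Sum>k\<in>S. d k * c k) = (\<Sum>k\<in>S. d k * c' k) + (\<Sum>k\<in>S. if m < c k then d k * (M - m) else 0)"
        using dec by (simp add: sum.distrib)
      also have "(\<Sum>k\<in>S. if m < c k then d k * (M - m) else 0) = (\<Sum>k\<in>{k\<in>S. m < c k}. d k * (M - m))"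
        using less.prems(1) by (simp add: sum.inter_filter)
      also have "\<dots> = sum d {k\<in>S. m < c k} * (M - m)" by (simp add: sum_distrib_right)
      finally have eq: "(\<Sum>k\<in>S. d k * c k) = (\<Sum>k\<in>S. d k * c' k) + sum d {k\<in>S. m < c k} * (M - m)" .
      have "sum d {k\<in>S. m < c k} * (M - m) \<ge> 0" using less.prems(3) m_lt by simp
      then show ?thesis using eq IH by linarith
    qed
  qed
qed



lemma QK_int: "rs \<in> QK_vecs V K \<Longrightarrow> K > 0 \<Longrightarrow> k \<in> V \<Longrightarrow> real K * rs k \<in> \<int>"
  unfolding QK_vecs_def by auto

lemma QK_sum_int:
  assumes "rs \<in> QK_vecs V K" "K > 0" "S \<subseteq> V"
  shows "real K * sum rs S \<in> \<int>"
proof -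
  have "real K * sum rs S = (\<Sum>k\<in>S. real K * rs k)" by (simp add: sum_distrib_left)
  also have "\<dots> \<in> \<int>" using QK_int[OF assms(1,2)] assms(3) by (intro Ints_sum) auto
  finally show ?thesis .
qed

lemma int_pos_ge1: "(x::real) \<in> \<int> \<Longrightarrow> x > 0 \<Longrightarrow> x \<ge> 1"
  by (metis Ints_cases of_int_0_less_iff of_int_1_le_iff zero_less_imp_eq_int int_one_le_iff_zero_less)

lemma sum_chi: "finite A \<Longrightarrow> sum (chi a) A = (if a \<in> A then 1 else 0)"
  unfolding chi_def by (simp add: sum.delta')

lemma exch:
  assumes fin: "finite V" and Zf: "\<forall>i\<in>V. finite (Z i)" and K: "K > 0"
    and rs: "rs \<in> core V Z" "rs \<in> QK_vecs V K" and ab: "a \<in> V" "b \<in> V" "a \<noteq> b"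
    and nex: "\<not> (\<exists>A. ut V Z rs A \<and> a \<in> A \<and> b \<notin> A)"
  shows "(\<lambda>k. rs k + 1 / real K * (chi a k - chi b k)) \<in> core V Z"
proof -
  define q where "q = (\<lambda>k. rs k + 1 / real K * (chi a k - chi b k))"
  have sq: "sum q A = sum rs A + 1 / real K * ((if a \<in> A then 1 else 0) - (if b \<in> A then 1 else 0))"
    if "finite A" for A
  proof -
    have "sum q A = sum rs A + (\<Sum>k\<in>A. 1 / real K * (chi a k - chi b k))"
      by (simp add: q_def sum.distrib)
    also have "(\<Sum>k\<in>A. 1 / real K * (chi a k - chi b k)) = 1 / real K * (sum (chi a) A - sum (chi b) A)"
      by (simp only: sum_distrib_left[symmetric] sum_subtractf)
    finally show ?thesis using that by (simp add: sum_chi)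
  qed
  have zero: "\<forall>k. k \<notin> V \<longrightarrow> q k = 0"
    using rs(1) ab by (auto simp: q_def chi_def core_def region_def)
  have RV: "sum rs V = R_CO V Z" using rs(1) by (simp add: core_def)
  have sV: "sum q V = R_CO V Z" using sq[OF fin] ab RV by simp
  have le: "sum q A \<le> pp V Z A" if A: "A \<subseteq> V" "A \<noteq> {}" for A
  proof -
    have finA: "finite A" using A(1) fin by (rule finite_subset)
    have l0: "sum rs A \<le> pp V Z A" by (rule core_le[OF fin rs(1) A])
    show ?thesis
    proof (cases "a \<in> A \<and> b \<notin> A")
      case True
      then have "\<not> ut V Z rs A" using nex by blast
      then have lt: "sum rs A < pp V Z A" using l0 A by (auto simp: ut_def)
      have "pp V Z A - sum rs A = sum rs (V - A) + ent Z A - ent Z V"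
        using sum.subset_diff[OF A(1) fin, of rs] RV by (simp add: pp_def)
      then have "real K * (pp V Z A - sum rs A) = real K * sum rs (V - A) + (real K * ent Z A - real K * ent Z V)"
        by (metis add_diff_eq distrib_left right_diff_distrib)
      also have "\<dots> \<in> \<int>"
      proof -
        have i1: "real K * sum rs (V - A) \<in> \<int>" using QK_sum_int[OF rs(2) K, of "V - A"] by auto
        have i2: "real K * ent Z A \<in> \<int>" "real K * ent Z V \<in> \<int>"
          unfolding ent_def by (metis Ints_mult Ints_of_nat)+
        show ?thesis by (rule Ints_add[OF i1 Ints_diff[OF i2]])
      qed
      finally have "real K * (pp V Z A - sum rs A) \<ge> 1" using lt K by (intro int_pos_ge1) auto
      then have "pp V Z A - sum rs A \<ge> 1 / real K" using K by (simp add: field_simps)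
      then show ?thesis using sq[OF finA] True by simp
    next
      case False
      have h: "0 \<le> 1 / real K" by simp
      have "(if a \<in> A then 1 else 0) - (if b \<in> A then 1 else 0) \<le> (0::real)" using False by auto
      then have "1 / real K * ((if a \<in> A then 1 else 0) - (if b \<in> A then 1 else 0)) \<le> 0"
        by (rule mult_nonneg_nonpos[OF h])
      then show ?thesis using sq[OF finA] l0 by linarith
    qed
  qed
  have "q \<in> core V Z" by (rule core_intro[OF fin zero sV]) (use le in blast)
  then show ?thesis by (simp add: q_def)
qed

lemma g_move:
  assumes "a \<noteq> b" "a \<in> V" "b \<in> V" "finite V"
  shows "gfun V w (\<lambda>k. rs k + \<delta> * (chi a k - chi b k)) =
         gfun V w rs + \<delta> * (2 * rs a + \<delta>) / w a - \<delta> * (2 * rs b - \<delta>) / w b"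
proof -
  have pt: "(rs k + \<delta> * (chi a k - chi b k))\<^sup>2 / w k =
      (rs k)\<^sup>2 / w k + ((if k = a then \<delta> * (2 * rs a + \<delta>) / w a else 0)
      - (if k = b then \<delta> * (2 * rs b - \<delta>) / w b else 0))" for k
  proof (cases "k = a")
    case True
    then have "(rs k + \<delta> * (chi a k - chi b k))\<^sup>2 = (rs k)\<^sup>2 + \<delta> * (2 * rs a + \<delta>)"
      using assms(1) by (simp add: chi_def power2_eq_square algebra_simps)
    then show ?thesis using True assms(1) by (simp add: add_divide_distrib)
  next
    case F1: False
    show ?thesis
    proof (cases "k = b")
      case True
      then have "(rs k + \<delta> * (chi a k - chi b k))\<^sup>2 = (rs k)\<^sup>2 - \<delta> * (2 * rs b - \<delta>)"
        using assms(1) by (simp add: chi_def power2_eq_square algebra_simps)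
      then show ?thesis using True assms(1) by (simp add: diff_divide_distrib)
    next
      case False
      then show ?thesis using F1 by (simp add: chi_def)
    qed
  qed
  show ?thesis unfolding gfun_def pt
    using assms by (simp add: sum.distrib sum_subtractf sum.delta)
qed



lemma main_dir:
  assumes fin: "finite V" and Zf: "\<forall>i\<in>V. finite (Z i)" and wpos: "\<forall>i\<in>V. w i > 0" and K: "K > 0"
    and rs: "rs \<in> core V Z" "rs \<in> QK_vecs V K" and r: "r \<in> core V Z" "r \<in> QK_vecs V K"
    and loc: "\<forall>a\<in>V. \<forall>b\<in>V. a \<noteq> b \<longrightarrow> (\<lambda>k. rs k + 1 / real K * (chi a k - chi b k)) \<in> core V Z \<longrightarrow>
               gfun V w rs \<le> gfun V w (\<lambda>k. rs k + 1 / real K * (chi a k - chi b k))"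
  shows "gfun V w rs \<le> gfun V w r"
proof -
  define \<delta> where "\<delta> = 1 / real K"
  have dpos': "\<delta> > 0" using K by (simp add: \<delta>_def)
  define d where "d k = r k - rs k" for k
  define u where "u k = (2 * rs k + \<delta>) / w k" for k
  define l where "l k = (2 * rs k - \<delta>) / w k" for k
  define c where "c k = (if d k > 0 then u k else l k)" for k
  have dint: "real K * d k \<in> \<int>" if "k \<in> V" for k
  proof -
    have "real K * d k = real K * r k - real K * rs k" by (simp add: d_def algebra_simps)
    then show ?thesis using QK_int[OF r(2) K that] QK_int[OF rs(2) K that] by simp
  qed
  have dpos: "d k \<ge> \<delta>" if "k \<in> V" "d k > 0" for k
  proof -
    have "real K * d k \<ge> 1" using dint[OF that(1)] that(2) K by (intro int_pos_ge1) auto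
    then show ?thesis using K by (simp add: \<delta>_def field_simps)
  qed
  have dneg: "d k \<le> - \<delta>" if "k \<in> V" "d k < 0" for k
  proof -
    have "- (real K * d k) \<in> \<int>" using dint[OF that(1)] by simp
    then have "- (real K * d k) \<ge> 1" using that(2) K by (intro int_pos_ge1) (auto simp: mult_pos_neg)
    then show ?thesis using K by (simp add: \<delta>_def field_simps)
  qed
  have step1: "(r k)\<^sup>2 / w k - (rs k)\<^sup>2 / w k \<ge> d k * c k" if "k \<in> V" for k
  proof -
    have wk: "w k > 0" using wpos that by auto
    have eq: "(r k)\<^sup>2 / w k - (rs k)\<^sup>2 / w k = d k * (2 * rs k + d k) / w k"
    proof -
      have "(r k)\<^sup>2 - (rs k)\<^sup>2 = d k * (2 * rs k + d k)" by (simp add: d_def power2_eq_square algebra_simps)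
      then show ?thesis by (metis diff_divide_distrib)
    qed
    show ?thesis
    proof (cases "d k > 0")
      case True
      have "d k * (2 * rs k + \<delta>) \<le> d k * (2 * rs k + d k)"
        using True dpos[OF that True] by (intro mult_left_mono) auto
      then have "d k * (2 * rs k + \<delta>) / w k \<le> d k * (2 * rs k + d k) / w k"
        using wk by (intro divide_right_mono) auto
      then show ?thesis using True eq by (simp add: c_def u_def)
    next
      case False
      show ?thesis
      proof (cases "d k = 0")
        case True
        have z1: "d k * c k = 0" using True by simp
        have z2: "d k * (2 * rs k + d k) / w k = 0" using True by simp
        show ?thesis using eq z1 z2 by linarith
      next
        case F2: False
        then have neg: "d k < 0" using False by simp
        have "d k * (2 * rs k - \<delta>) \<le> d k * (2 * rs k + d k)"
          using neg dneg[OF that neg] by (intro mult_left_mono_neg) auto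
        then have "d k * (2 * rs k - \<delta>) / w k \<le> d k * (2 * rs k + d k) / w k"
          using wk by (intro divide_right_mono) auto
        then show ?thesis using False eq by (simp add: c_def l_def)
      qed
    qed
  qed
  have sumd: "sum d V = 0"
    using r(1) rs(1) by (simp add: d_def sum_subtractf core_def)
  have layer: "\<forall>\<theta>. sum d {k\<in>V. \<theta> < c k} \<ge> 0"
  proof
    fix \<theta>
    define I where "I = {i\<in>V. d i < 0 \<and> \<theta> < c i}"
    define J where "J = {j\<in>V. d j > 0 \<and> \<not> \<theta> < c j}"
    have pair: "\<exists>A. ut V Z rs A \<and> j \<in> A \<and> i \<notin> A" if ij: "i \<in> I" "j \<in> J" for i j
    proof (rule ccontr)
      assume nex: "\<not> (\<exists>A. ut V Z rs A \<and> j \<in> A \<and> i \<notin> A)"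
      have iV: "i \<in> V" "j \<in> V" "i \<noteq> j" using ij by (auto simp: I_def J_def)
      have mv: "(\<lambda>k. rs k + 1 / real K * (chi j k - chi i k)) \<in> core V Z"
        by (rule exch[OF fin Zf K rs iV(2) iV(1) _ nex]) (use iV in auto)
      have g1: "gfun V w rs \<le> gfun V w (\<lambda>k. rs k + 1 / real K * (chi j k - chi i k))"
        using loc iV mv by auto
      have g2: "gfun V w (\<lambda>k. rs k + 1 / real K * (chi j k - chi i k)) =
          gfun V w rs + \<delta> * (2 * rs j + \<delta>) / w j - \<delta> * (2 * rs i - \<delta>) / w i"
        unfolding \<delta>_def by (rule g_move) (use iV fin in auto)
      have cj: "c j = u j" "c j \<le> \<theta>" using ij(2) by (auto simp: J_def c_def)
      have ci: "c i = l i" "\<theta> < c i" using ij(1) by (auto simp: I_def c_def)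
      have "u j < l i" using cj ci by simp
      then have "\<delta> * u j < \<delta> * l i" using dpos' by simp
      moreover have "\<delta> * u j = \<delta> * (2 * rs j + \<delta>) / w j" "\<delta> * l i = \<delta> * (2 * rs i - \<delta>) / w i"
        by (simp_all add: u_def l_def)
      ultimately show False using g1 g2 by linarith
    qed
    obtain A where A: "A \<subseteq> V" "J \<subseteq> A" "A \<inter> I = {}" "sum d A \<le> 0"
    proof (cases "I = {}")
      case True
      show ?thesis by (rule that[of V]) (use True sumd in \<open>auto simp: J_def\<close>)
    next
      case False
      then obtain i0 where i0: "i0 \<in> I" by blast
      have ex: "\<exists>Aj. ut V Z rs Aj \<and> j \<in> Aj \<and> Aj \<inter> I = {}" if j: "j \<in> J" for j
      proof -
        have "\<exists>A. ut V Z rs A \<and> j \<in> A" using pair[OF i0 j] by blast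
        then obtain Am where Am: "ut V Z rs Am \<and> j \<in> Am"
          and minc: "\<forall>B. ut V Z rs B \<and> j \<in> B \<longrightarrow> card Am \<le> card B"
          using ex_has_least_nat[of "\<lambda>A. ut V Z rs A \<and> j \<in> A" _ card] by blast
        have finAm: "finite Am" using Am fin by (auto simp: ut_def intro: finite_subset)
        have "i \<notin> Am" if iI: "i \<in> I" for i
        proof -
          obtain Aij where Aij: "ut V Z rs Aij" "j \<in> Aij" "i \<notin> Aij" using pair[OF iI j] by blast
          have int: "ut V Z rs (Am \<inter> Aij)" using Am Aij by (intro ut_meet(1)[OF fin Zf rs(1)]) auto
          have "card Am \<le> card (Am \<inter> Aij)" using minc int Am Aij(2) by auto
          then have "Am \<inter> Aij = Am" using finAm by (intro card_seteq) auto
          then show ?thesis using Aij(3) by auto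
        qed
        then show ?thesis using Am by blast
      qed
      then obtain f where f: "\<forall>j\<in>J. ut V Z rs (f j) \<and> j \<in> f j \<and> f j \<inter> I = {}" by metis
      have finJ: "finite J" using fin by (simp add: J_def)
      have sA: "sum (\<lambda>k. r k - rs k) (\<Union>(f ` J)) \<le> 0"
        using family[OF fin Zf rs(1) r(1)] finJ f by auto
      show ?thesis
      proof (rule that[of "\<Union>(f ` J)"])
        show "\<Union>(f ` J) \<subseteq> V" using f by (auto simp: ut_def)
        show "J \<subseteq> \<Union>(f ` J)" using f by auto
        show "\<Union>(f ` J) \<inter> I = {}" using f by auto
        show "sum d (\<Union>(f ` J)) \<le> 0" using sA by (simp add: d_def)
      qed
    qed
    have e1: "sum d {k\<in>V. \<theta> < c k} = (\<Sum>k\<in>V. if \<theta> < c k then d k else 0)"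
      using fin by (simp add: sum.inter_filter)
    have "V - A = {k\<in>V. k \<notin> A}" by auto
    then have e2: "sum d (V - A) = (\<Sum>k\<in>V. if k \<notin> A then d k else 0)"
      using fin by (simp add: sum.inter_filter)
    have e3: "sum d (V - A) = - sum d A" using sum_diff[OF fin A(1), of d] sumd by simp
    have "(\<Sum>k\<in>V. if k \<notin> A then d k else 0) \<le> (\<Sum>k\<in>V. if \<theta> < c k then d k else 0)"
    proof (rule sum_mono)
      fix k assume k: "k \<in> V"
      consider "d k > 0" | "d k < 0" | "d k = 0" by linarith
      then show "(if k \<notin> A then d k else 0) \<le> (if \<theta> < c k then d k else 0)"
      proof cases
        case 1
        then show ?thesis using k A(2) by (auto simp: J_def)
      next
        case 2
        then show ?thesis using k A(3) by (auto simp: I_def)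
      next
        case 3 then show ?thesis by simp
      qed
    qed
    then show "sum d {k\<in>V. \<theta> < c k} \<ge> 0" using e1 e2 e3 A(4) by linarith
  qed
  have "(\<Sum>k\<in>V. d k * c k) \<ge> 0" by (rule layer_cake[OF fin sumd layer])
  moreover have "(\<Sum>k\<in>V. d k * c k) \<le> (\<Sum>k\<in>V. (r k)\<^sup>2 / w k - (rs k)\<^sup>2 / w k)"
    using step1 by (rule sum_mono)
  ultimately show ?thesis by (simp add: gfun_def sum_subtractf)
qed


lemma QK_move:
  assumes "rs \<in> QK_vecs V K"
  shows "(\<lambda>k. rs k + real \<zeta> / real K * (chi i k - chi j k)) \<in> QK_vecs V K"
  unfolding QK_vecs_def
proof (intro CollectI ballI)
  fix k assume k: "k \<in> V"
  obtain z where z: "rs k = real_of_int z / real K" using assms k by (auto simp: QK_vecs_def)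
  define e :: int where "e = (if k = i then 1 else 0) - (if k = j then 1 else 0)"
  have ce: "chi i k - chi j k = real_of_int e" by (simp add: chi_def e_def)
  have "rs k + real \<zeta> / real K * (chi i k - chi j k) = real_of_int (z + int \<zeta> * e) / real K"
    unfolding z ce by (simp add: add_divide_distrib)
  then show "\<exists>z::int. rs k + real \<zeta> / real K * (chi i k - chi j k) = real_of_int z / real K" by blast
qed

theorem lemma2:
  fixes V :: "'u set" and Z :: "'u \<Rightarrow> 'p set" and w :: "'u \<Rightarrow> real"
    and rs :: "'u \<Rightarrow> real" and K :: nat
  assumes "finite V" and "card V > 1"
    and "\<forall>i\<in>V. finite (Z i)"
    and "\<forall>i\<in>V. w i > 0"
    and "K = card (fund_partition V Z) - 1"
    and "rs \<in> core V Z \<inter> QK_vecs V K"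
  shows "(\<forall>r\<in>core V Z \<inter> QK_vecs V K. gfun V w rs \<le> gfun V w r) \<longleftrightarrow>
         (\<forall>i\<in>V. \<forall>j\<in>V. \<forall>\<zeta>::nat. \<zeta> > 0 \<longrightarrow>
            (\<lambda>k. rs k + real \<zeta> / real K * (chi i k - chi j k)) \<in> core V Z \<longrightarrow>
            gfun V w rs \<le> gfun V w (\<lambda>k. rs k + real \<zeta> / real K * (chi i k - chi j k)))"
proof
  assume G: "\<forall>r\<in>core V Z \<inter> QK_vecs V K. gfun V w rs \<le> gfun V w r"
  show "\<forall>i\<in>V. \<forall>j\<in>V. \<forall>\<zeta>::nat. \<zeta> > 0 \<longrightarrow>
            (\<lambda>k. rs k + real \<zeta> / real K * (chi i k - chi j k)) \<in> core V Z \<longrightarrow>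
            gfun V w rs \<le> gfun V w (\<lambda>k. rs k + real \<zeta> / real K * (chi i k - chi j k))"
  proof (intro ballI allI impI)
    fix i j and \<zeta> :: nat
    assume mv: "(\<lambda>k. rs k + real \<zeta> / real K * (chi i k - chi j k)) \<in> core V Z"
    have "(\<lambda>k. rs k + real \<zeta> / real K * (chi i k - chi j k)) \<in> QK_vecs V K"
      using assms(6) by (intro QK_move) auto
    then show "gfun V w rs \<le> gfun V w (\<lambda>k. rs k + real \<zeta> / real K * (chi i k - chi j k))"
      using G mv by simp
  qed
next
  assume L: "\<forall>i\<in>V. \<forall>j\<in>V. \<forall>\<zeta>::nat. \<zeta> > 0 \<longrightarrow>
            (\<lambda>k. rs k + real \<zeta> / real K * (chi i k - chi j k)) \<in> core V Z \<longrightarrow>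
            gfun V w rs \<le> gfun V w (\<lambda>k. rs k + real \<zeta> / real K * (chi i k - chi j k))"
  show "\<forall>r\<in>core V Z \<inter> QK_vecs V K. gfun V w rs \<le> gfun V w r"
  proof
    fix r assume r: "r \<in> core V Z \<inter> QK_vecs V K"
    show "gfun V w rs \<le> gfun V w r"
    proof (cases "K = 0")
      case True
      have "\<forall>k\<in>V. r k = 0" "\<forall>k\<in>V. rs k = 0" using r assms(6) True by (auto simp: QK_vecs_def)
      then have "gfun V w r = gfun V w rs" unfolding gfun_def by (intro sum.cong) auto
      then show ?thesis by simp
    next
      case False
      then have K: "K > 0" by simp
      have loc: "\<forall>a\<in>V. \<forall>b\<in>V. a \<noteq> b \<longrightarrow> (\<lambda>k. rs k + 1 / real K * (chi a k - chi b k)) \<in> core V Z \<longrightarrow>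
               gfun V w rs \<le> gfun V w (\<lambda>k. rs k + 1 / real K * (chi a k - chi b k))"
      proof (intro ballI impI)
        fix a b assume ab: "a \<in> V" "b \<in> V"
          and m: "(\<lambda>k. rs k + 1 / real K * (chi a k - chi b k)) \<in> core V Z"
        have "(\<lambda>k. rs k + real (1::nat) / real K * (chi a k - chi b k)) \<in> core V Z
           \<longrightarrow> gfun V w rs \<le> gfun V w (\<lambda>k. rs k + real (1::nat) / real K * (chi a k - chi b k))"
          using L[rule_format, OF ab(1) ab(2), of 1] by simp
        then show "gfun V w rs \<le> gfun V w (\<lambda>k. rs k + 1 / real K * (chi a k - chi b k))"
          using m by simp
      qed
      show ?thesis
      proof (rule main_dir[OF assms(1,3,4) K _ _ _ _ loc])
        show "rs \<in> core V Z" "rs \<in> QK_vecs V K" using assms(6) by auto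
        show "r \<in> core V Z" "r \<in> QK_vecs V K" using r by auto
      qed
    qed
  qed
qed

end
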